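(* With $\beta=1/p^2$, the lattice $\varphi_\beta(M)\subset\mathbb{R}^n$ is a rotated version of $D_n$, i.e. $\varphi_\beta(M)=D_nQ$ for some real orthogonal $n\times n$ matrix $Q$.
   Context: Let $n>1$ be an odd integer and $p$ a prime with $p\equiv 1 \pmod n$. Let $\zeta_p=e^{2\pi i/p}$, let $r$ be a primitive root modulo $p$, and let $\sigma$ be the automorphism of $\mathbb{Q}(\zeta_p)$ with $\sigma(\zeta_p)=\zeta_p^r$. Let $\mathbb{K}=\{y\in\mathbb{Q}(\zeta_p):\sigma^n(y)=y\}$ (totally real of degree $n$, embeddings into $\mathbb{R}$ given by the restrictions of $\sigma^0,\dots,\sigma^{n-1}$). Let $\alpha=\prod_{j=0}^{(p-3)/2}(1-\zeta_p^{r^j})$, let $\lambda$ be an integer with $\lambda(r-1)\equiv1\pmod p$, $z=\zeta_p^{\lambda}\alpha(1-\zeta_p)$, and $x=\mathrm{Tr}_{\mathbb{Q}(\zeta_p)/\mathbb{K}}(z)=\sum_{j=1}^{(p-1)/n}\sigma^{jn}(z)$. For a totally positive $\beta\in\mathbb{K}$ define $\varphi_\beta:\mathbb{K}\to\mathbb{R}^n$, $\varphi_\beta(y)=(\sqrt{\sigma^0(\beta)}\sigma^0(y),\dots,\sqrt{\sigma^{n-1}(\beta)}\sigma^{n-1}(y))$. Let $M$ be the $\mathbb{Z}$-module generated by $x+\sigma(x),\ x-\sigma(x),\ \sigma(x)-\sigma^2(x),\dots,\sigma^{n-2}(x)-\sigma^{n-1}(x)$. $D_n=\{(y_1,\dots,y_n)\in\mathbb{Z}^n: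 y_1+\dots+y_n \text{ even}\}$. *)

theory Defs
  imports "HOL-Analysis.Analysis" "HOL-Number_Theory.Number_Theory"
begin

definition zeta :: "nat \<Rightarrow> complex" where
  "zeta p = exp (2 * pi * \<i> / of_nat p)"

text \<open>The element z = zeta^lam * alpha * (1 - zeta), written as a function Zf p r lam w of the
  root w = zeta, so that its image under sigma^m (which sends zeta to zeta^(r^m)) is
  Zf p r lam (zeta p ^ (r ^ m)).\<close>
definition Zf :: "nat \<Rightarrow> nat \<Rightarrow> int \<Rightarrow> complex \<Rightarrow> complex" where
  "Zf p r lam w = (w powi lam) * (\<Prod>j\<in>{0..(p - 3) div 2}. (1 - w ^ (r ^ j))) * (1 - w)"

definition sig_z :: "nat \<Rightarrow> nat \<Rightarrow> int \<Rightarrow> nat \<Rightarrow> complex" where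
  "sig_z p r lam m = Zf p r lam (zeta p ^ (r ^ m))"

definition sig_x :: "nat \<Rightarrow> nat \<Rightarrow> nat \<Rightarrow> int \<Rightarrow> nat \<Rightarrow> complex" where
  "sig_x n p r lam m = (\<Sum>j\<in>{1..(p - 1) div n}. sig_z p r lam (j * n + m))"

definition sig_gen :: "nat \<Rightarrow> nat \<Rightarrow> nat \<Rightarrow> int \<Rightarrow> nat \<Rightarrow> nat \<Rightarrow> complex" where
  "sig_gen n p r lam i m =
     (if i = 0 then sig_x n p r lam m + sig_x n p r lam (m + 1)
      else sig_x n p r lam (i - 1 + m) - sig_x n p r lam (i + m))"

text \<open>phi_beta(M) for beta = 1/p^2 (a rational, fixed by all sigma^m), as a set of
  vectors nat => complex supported on {0..<n}; component m is sqrt(sigma^m beta) * sigma^m(y).\<close>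
definition phiM :: "nat \<Rightarrow> nat \<Rightarrow> nat \<Rightarrow> int \<Rightarrow> (nat \<Rightarrow> complex) set" where
  "phiM n p r lam =
     {(\<lambda>m. if m < n then complex_of_real (sqrt (1 / (real p)^2)) *
                        (\<Sum>i<n. of_int (c i) * sig_gen n p r lam i m) else 0) | c :: nat \<Rightarrow> int. True}"

end

theory Submission
  imports Defs "HOL-Computational_Algebra.Computational_Algebra"
begin


locale T2 =
  fixes n p r :: nat and lam :: int
  assumes n1: "n > 1" and nodd: "odd n" and pp: "prime p" and pn: "[p = 1] (mod n)"
    and ordr: "ord p r = p - 1" and lamc: "[lam * (int r - 1) = 1] (mod int p)"
begin

definition N where "N = p - 1"
definition h where "h = (p - 1) div 2"
definition t where "t = (p - 1) div n"
definition e :: "int \<Rightarrow> complex" where "e a = exp (2 * pi * \<i> * of_int a / of_nat p)"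

lemma p2: "p > 2"
proof -
  have "p \<ge> 2" using pp prime_ge_2_nat by auto
  moreover have "p \<noteq> 2"
  proof
    assume "p = 2"
    then have "[2 = 1] (mod n)" using pn by simp
    then have "2 mod n = 1" using n1 by (simp add: cong_def)
    moreover have "2 mod n \<noteq> 1" using n1 by (cases "n = 2") auto
    ultimately show False by simp
  qed
  ultimately show ?thesis by simp
qed

lemma pdvd: "n dvd p - 1"
  using pn p2 by (metis cong_to_1_nat)

lemma Nnt: "N = n * t"
  using pdvd unfolding N_def t_def by simp

lemma podd: "odd p" using pp p2 prime_odd_nat by auto

lemma Neven: "even N" using podd p2 unfolding N_def by simp

lemma teven: "even t" using Neven Nnt nodd by simp

lemma N2h: "N = 2 * h" using Neven unfolding N_def h_def by simp

lemma hnt: "h = n * (t div 2)"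
  using N2h Nnt teven by (simp add: div_mult_swap nonzero_mult_div_cancel_left zero_neq_numeral)

lemma tpos: "t > 0" using Nnt p2 N_def using neq0_conv by fastforce

lemma hpos: "h > 0" using N2h p2 N_def by simp

lemma cop: "coprime p r"
  using ordr p2 by (metis less_diff_conv not_one_less_zero one_add_one ord_eq_0)

lemma e_add: "e (a + b) = e a * e b"
  unfolding e_def by (simp add: exp_add[symmetric] add_divide_distrib distrib_left distrib_right)

lemma e_0[simp]: "e 0 = 1" unfolding e_def by simp

lemma e_minus: "e (- a) * e a = 1"
  using e_add[of "-a" a] by simp

lemma e_pmult: "e (int p * k) = 1"
proof -
  have "e (int p * k) = exp (2 * pi * \<i>) powi k"
    unfolding e_def exp_power_int using p2 by (simp add: field_simps)
  then show ?thesis by simp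
qed

lemma e_cong: assumes "[a = b] (mod int p)" shows "e a = e b"
proof -
  obtain k where "a = b + int p * k" using assms
    by (metis cong_iff_lin cong_sym)
  then show ?thesis by (simp add: e_add e_pmult)
qed

lemma e_eq_1: "e a = 1 \<longleftrightarrow> int p dvd a"
proof
  assume "int p dvd a" then show "e a = 1" by (auto simp: e_pmult)
next
  assume "e a = 1"
  then obtain k :: int where k: "Im (2 * pi * \<i> * of_int a / of_nat p) = of_int (2 * k) * pi"
    unfolding e_def exp_eq_1 by blast
  have "2 * pi * of_int a / real p = 2 * pi * of_int k" using k by simp
  then have "real_of_int a = real p * of_int k" using p2 by (simp add: field_simps)
  then have "a = int p * k" by (metis of_int_eq_iff of_int_mult of_int_of_nat_eq)
  then show "int p dvd a" by simp
qed

lemma cnj_e: "cnj (e a) = e (- a)"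
  unfolding e_def by (simp add: exp_cnj)

lemma e_pow: "e a ^ k = e (int k * a)"
  unfolding e_def by (simp add: exp_of_nat_mult[symmetric] mult_ac)

lemma e_powi: "e a powi l = e (l * a)"
  unfolding e_def by (simp add: exp_power_int mult_ac)

lemma zeta_pow: "zeta p ^ k = e (int k)"
  unfolding zeta_def e_def by (simp add: exp_of_nat_mult[symmetric] mult_ac)

end


lemma lead_P: "p > 0 \<Longrightarrow> lead_coeff (Polynomial.monom (1::complex) p - 1) = 1"
  by (metis (no_types, lifting) degree_1 degree_minus degree_monom_eq
    lead_coeff_add_le lead_coeff_monom uminus_add_conv_diff zero_neq_one)

lemma roots_prod:
  fixes p :: nat
  assumes "p > 0"
  shows "(\<Prod>z | z ^ p = 1. [:- z, 1:]) = Polynomial.monom (1::complex) p - 1"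
proof -
  let ?P = "Polynomial.monom (1::complex) p - 1"
  have rt: "poly ?P z = 0 \<longleftrightarrow> z ^ p = 1" for z by (simp add: poly_monom)
  have "rsquarefree ?P"
    unfolding rsquarefree_roots
  proof (intro allI notI)
    fix a assume "poly ?P a = 0 \<and> poly (pderiv ?P) a = 0"
    then have "a ^ p = 1" and "of_nat p * a ^ (p - 1) = 0"
      using rt by (auto simp: pderiv_diff pderiv_monom poly_monom)
    then show False using assms by (cases "a = 0") (auto simp: power_0_left)
  qed
  from complex_poly_decompose_rsquarefree[OF this] show ?thesis
    using lead_P[OF assms] rt by simp
qed

context T2 begin

lemma e_inj: "a < p \<Longrightarrow> b < p \<Longrightarrow> e (int a) = e (int b) \<Longrightarrow> a = b"
proof -
  assume ab: "a < p" "b < p" "e (int a) = e (int b)"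
  have "e (int a - int b) = e (int a) * e (- int b)" using e_add[of "int a" "- int b"] by simp
  also have "\<dots> = 1" using ab(3) e_minus[of "int b"] by (simp add: mult.commute)
  finally have "int p dvd int a - int b" using e_eq_1 by blast
  then show "a = b" using ab(1,2)
    by (smt (verit, best) dvd_minus_iff of_nat_0_le_iff of_nat_eq_iff of_nat_less_iff zdvd_not_zless)
qed

lemma roots_e: "{z::complex. z ^ p = 1} = (\<lambda>a. e (int a)) ` {..<p}"
proof -
  have "{z::complex. z ^ p = 1} = {exp(2 * of_real pi * \<i> * of_nat j / of_nat p) | j. j < p}"
    using p2 by (intro complex_roots_unity) simp
  also have "\<dots> = (\<lambda>a. e (int a)) ` {..<p}" unfolding e_def by auto
  finally show ?thesis .
qed

lemma prod_e: "(\<Prod>a\<in>{0<..<p}. (1 - e (int a))) = of_nat p"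
proof -
  let ?Q1 = "\<Prod>a\<in>{0<..<p}. [:- e (int a), 1:]"
  let ?Q2 = "\<Sum>k<p. Polynomial.monom (1::complex) k"
  have inj: "inj_on (\<lambda>a. e (int a)) {..<p}" using e_inj by (auto simp: inj_on_def)
  have "Polynomial.monom (1::complex) p - 1 = (\<Prod>z\<in>(\<lambda>a. e (int a)) ` {..<p}. [:- z, 1:])"
    using roots_prod[of p] p2 roots_e by simp
  also have "\<dots> = (\<Prod>a<p. [:- e (int a), 1:])" by (rule prod.reindex[OF inj, unfolded comp_def])
  also have "{..<p} = insert 0 {0<..<p}" using p2 by auto
  also have "(\<Prod>a\<in>insert 0 {0<..<p}. [:- e (int a), 1:]) = [:-1, 1:] * ?Q1" by simp
  finally have eq1: "Polynomial.monom (1::complex) p - 1 = [:-1, 1:] * ?Q1" .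
  have eq2: "Polynomial.monom (1::complex) p - 1 = [:-1, 1:] * ?Q2"
  proof -
    have "poly (Polynomial.monom (1::complex) p - 1) x = poly ([:-1, 1:] * ?Q2) x" for x
      by (simp add: poly_monom poly_sum power_diff_1_eq algebra_simps)
    then show ?thesis using poly_eq_poly_eq_iff by blast
  qed
  have "[:-1, 1:] * ?Q1 = [:-1, 1:] * ?Q2" using eq1 eq2 by (rule trans[OF sym])
  moreover have "[:-1, 1::complex:] \<noteq> 0" by simp
  ultimately have "?Q1 = ?Q2" using mult_left_cancel by blast
  then have "poly ?Q1 1 = poly ?Q2 1" by simp
  then show ?thesis by (simp add: poly_prod poly_sum poly_monom)
qed

lemma sum_e: "(\<Sum>a<p. e (int a * b)) = (if int p dvd b then of_nat p else 0)"
proof (cases "int p dvd b")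
  case True
  then have "e (int a * b) = 1" for a using e_eq_1 by simp
  then show ?thesis using True by simp
next
  case False
  then have ne: "e b \<noteq> 1" using e_eq_1 by simp
  have "(\<Sum>a<p. e (int a * b)) = (\<Sum>a<p. e b ^ a)" by (simp add: e_pow)
  also have "\<dots> = (e b ^ p - 1) / (e b - 1)" using ne by (simp add: geometric_sum)
  also have "e b ^ p = 1" by (simp add: e_pow e_pmult)
  finally show ?thesis using False by simp
qed

lemma sum_e1: "(\<Sum>a\<in>{0<..<p}. e (int a * b)) = (if int p dvd b then of_nat p - 1 else - 1)"
proof -
  have "{..<p} = insert 0 {0<..<p}" using p2 by auto
  then have "(\<Sum>a<p. e (int a * b)) = 1 + (\<Sum>a\<in>{0<..<p}. e (int a * b))" by simp
  then have "(\<Sum>a\<in>{0<..<p}. e (int a * b)) = (\<Sum>a<p. e (int a * b)) - 1" by simp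
  then show ?thesis using sum_e[of b] by simp
qed

lemma gen: "bij_betw (\<lambda>i. r ^ i mod p) {..<N} {0<..<p}"
proof -
  have "residue_primroot p r" unfolding residue_primroot_def
    using cop ordr p2 totient_prime[OF pp] by auto
  from residue_primroot_is_generator[OF _ this] p2 show ?thesis
    using totient_prime[OF pp] totatives_prime[OF pp] unfolding N_def by auto
qed

lemma e_mod: "e (int (a mod p) * b) = e (int a * b)"
  by (rule e_cong) (simp add: cong_def mod_mult_left_eq of_nat_mod)

lemma sum_gen: "(\<Sum>i<N. e (int (r ^ i) * b)) = (if int p dvd b then of_nat p - 1 else - 1)"
proof -
  have "(\<Sum>i<N. e (int (r ^ i) * b)) = (\<Sum>i<N. e (int (r ^ i mod p) * b))" by (simp add: e_mod)
  also have "\<dots> = (\<Sum>a\<in>{0<..<p}. e (int a * b))"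
    by (rule sum.reindex_bij_betw[OF gen, where g = "\<lambda>a. e (int a * b)"])
  finally show ?thesis using sum_e1 by simp
qed

lemma prod_gen: "(\<Prod>i<N. (1 - e (int (r ^ i)))) = of_nat p"
proof -
  have "(\<Prod>i<N. (1 - e (int (r ^ i)))) = (\<Prod>i<N. (1 - e (int (r ^ i mod p))))"
    using e_mod[of _ 1] by simp
  also have "\<dots> = (\<Prod>a\<in>{0<..<p}. (1 - e (int a)))"
    by (rule prod.reindex_bij_betw[OF gen, where g = "\<lambda>a. 1 - e (int a)"])
  finally show ?thesis using prod_e by simp
qed

end


lemma alt_sum: "even (t::nat) \<Longrightarrow> (\<Sum>j<t. (-1::complex) ^ j) = 0"
proof -
  assume "even t"
  then obtain k where k: "t = 2 * k" by blast
  have "(\<Sum>j<2 * k. (-1::complex) ^ j) = 0" by (induction k) (auto simp: mult_2)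
  then show ?thesis using k by simp
qed

context T2 begin

definition f :: "nat \<Rightarrow> complex" where "f k = 1 - e (int (r ^ k))"
definition P :: "nat \<Rightarrow> complex" where "P m = (\<Prod>j<h. f (m + j))"
definition u :: complex where "u = e lam * P 0"
definition g :: "nat \<Rightarrow> complex" where "g k = (-1) ^ k * e (int (r ^ k))"
definition G :: "nat \<Rightarrow> complex" where "G m = (\<Sum>s<t. g (s * n + m))"

lemma rN: "[r ^ N = 1] (mod p)"
  using ord_works[of r p] ordr unfolding N_def by simp

lemma rNi: "[int r ^ N = 1] (mod int p)"
  using rN using cong_int_iff by force

lemma rh: "[int r ^ h = -1] (mod int p)"
proof -
  have "int p dvd int r ^ N - 1" using rNi cong_iff_dvd_diff by blast
  also have "int r ^ N - 1 = (int r ^ h - 1) * (int r ^ h + 1)"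
    using N2h by (simp add: power_mult algebra_simps power2_eq_square)
  finally have "int p dvd int r ^ h - 1 \<or> int p dvd int r ^ h + 1"
    using pp by (simp add: prime_dvd_mult_eq_int)
  moreover have "\<not> int p dvd int r ^ h - 1"
  proof
    assume "int p dvd int r ^ h - 1"
    then have "[int r ^ h = 1] (mod int p)" using cong_iff_dvd_diff by blast
    then have "[r ^ h = 1] (mod p)" using cong_int_iff by force
    moreover have "0 < h" "h < ord p r" using hpos N2h ordr unfolding N_def by auto
    ultimately show False using ord_minimal by blast
  qed
  ultimately have "int p dvd int r ^ h - (-1)" by simp
  then show ?thesis using cong_iff_dvd_diff by blast
qed

lemma rmh: "e (int (r ^ (m + h))) = e (- int (r ^ m))"
proof (rule e_cong)
  have "[int r ^ m * int r ^ h = int r ^ m * (-1)] (mod int p)"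
    using rh by (rule cong_scalar_left)
  then show "[int (r ^ (m + h)) = - int (r ^ m)] (mod int p)" by (simp add: power_add)
qed

lemma rmN: "e (int (r ^ (m + N)) * b) = e (int (r ^ m) * b)"
proof (rule e_cong)
  have "[int r ^ m * int r ^ N * b = int r ^ m * 1 * b] (mod int p)"
    using rNi by (intro cong_mult cong_refl)
  then show "[int (r ^ (m + N)) * b = int (r ^ m) * b] (mod int p)" by (simp add: power_add)
qed

lemma f_nz: "f m \<noteq> 0"
proof
  assume "f m = 0"
  then have "int p dvd int (r ^ m)" using e_eq_1 unfolding f_def by simp
  then have "p dvd r ^ m" by (metis int_dvd_int_iff of_nat_power)
  then have "p dvd r" using pp prime_dvd_power by blast
  then show False using cop pp by (metis coprime_absorb_left not_prime_unit)
qed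

lemma one_minus_e: "1 - e (- x) = - e (- x) * (1 - e x)"
  using e_minus[of x] by (simp add: algebra_simps)

lemma P_step: "P (Suc m) = - e (- int (r ^ m)) * P m"
proof -
  have "P (Suc m) * f m = (\<Prod>j<Suc h. f (m + j))"
    unfolding P_def by (subst prod.lessThan_Suc_shift) (simp add: mult.commute)
  also have "\<dots> = P m * f (m + h)" unfolding P_def by (subst prod.lessThan_Suc) simp
  also have "f (m + h) = - e (- int (r ^ m)) * f m" unfolding f_def rmh by (rule one_minus_e)
  finally have "P (Suc m) * f m = (- e (- int (r ^ m)) * P m) * f m" by simp
  then show ?thesis using mult_right_cancel[OF f_nz[of m]] by blast
qed

lemma lam_cong: "e (int (r ^ Suc m) * lam - int (r ^ m)) = e (int (r ^ m) * lam)"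
proof (rule e_cong)
  have "int p dvd lam * (int r - 1) - 1" using lamc cong_iff_dvd_diff by blast
  then have "int p dvd int (r ^ m) * (lam * (int r - 1) - 1)" by simp
  also have "int (r ^ m) * (lam * (int r - 1) - 1) = (int (r ^ Suc m) * lam - int (r ^ m)) - int (r ^ m) * lam"
    by (simp add: algebra_simps)
  finally show "[int (r ^ Suc m) * lam - int (r ^ m) = int (r ^ m) * lam] (mod int p)"
    using cong_iff_dvd_diff by blast
qed

lemma A: "e (int (r ^ m) * lam) * P m = (-1) ^ m * u"
proof (induction m)
  case 0
  then show ?case by (simp add: u_def)
next
  case (Suc m)
  have "e (int (r ^ Suc m) * lam) * P (Suc m) = - (e (int (r ^ Suc m) * lam) * e (- int (r ^ m)) * P m)"
    by (simp only: P_step) (simp add: algebra_simps)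
  also have "e (int (r ^ Suc m) * lam) * e (- int (r ^ m)) = e (int (r ^ m) * lam)"
    using lam_cong e_add[of "int (r ^ Suc m) * lam" "- int (r ^ m)"] by simp
  finally show ?case using Suc.IH by simp
qed

lemma sz: "sig_z p r lam m = (-1) ^ m * u * f m"
proof -
  have hh: "{0..(p - 3) div 2} = {..<h}" using hpos unfolding h_def by auto
  have "sig_z p r lam m = e (int (r ^ m)) powi lam * (\<Prod>j<h. 1 - e (int (r ^ m)) ^ (r ^ j)) * f m"
    unfolding sig_z_def Zf_def zeta_pow hh f_def by simp
  also have "e (int (r ^ m)) powi lam = e (int (r ^ m) * lam)" by (simp add: e_powi mult.commute)
  also have "(\<Prod>j<h. 1 - e (int (r ^ m)) ^ (r ^ j)) = P m"
    unfolding P_def f_def by (intro prod.cong refl) (simp add: e_pow power_add mult.commute)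
  finally have X: "sig_z p r lam m = e (int (r ^ m) * lam) * P m * f m" .
  show ?thesis by (simp only: X A)
qed

lemma g_N: "g (k + N) = g k"
proof -
  have "(-1::complex) ^ (k + N) = (-1) ^ k" using Neven by (simp add: power_add)
  then show ?thesis unfolding g_def using rmN[of k 1] by simp
qed

lemma G_n: "G (m + n) = G m"
proof -
  have e1: "(\<Sum>s<Suc t. g (s * n + m)) = g m + G (m + n)"
    unfolding G_def by (subst sum.lessThan_Suc_shift) (simp add: algebra_simps)
  have gt: "g (t * n + m) = g m" using g_N[of m] Nnt by (simp add: add.commute mult.commute)
  have e2: "(\<Sum>s<Suc t. g (s * n + m)) = G m + g m"
    unfolding G_def by (subst sum.lessThan_Suc) (simp add: gt)
  from e1 e2 have "g m + G (m + n) = G m + g m" by simp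
  then show ?thesis by (metis add.commute add_left_cancel)
qed

lemma G_nk: "G (m + n * k) = G m"
proof (induction k)
  case (Suc k)
  have "G (m + n * Suc k) = G ((m + n * k) + n)" by (simp add: algebra_simps)
  then show ?case using G_n Suc.IH by simp
qed simp

lemma sign_sum: "(\<Sum>j\<in>{1..t}. (-1::complex) ^ (j * n + m)) = 0"
proof -
  have "(-1::complex) ^ (j * n + m) = (-1) ^ m * (-1) ^ j" for j
  proof -
    have "(-1::complex) ^ (j * n) = ((-1) ^ n) ^ j" by (metis power_mult mult.commute)
    also have "(-1::complex) ^ n = -1" using nodd by simp
    finally show ?thesis by (simp add: power_add mult.commute)
  qed
  then have "(\<Sum>j\<in>{1..t}. (-1::complex) ^ (j * n + m)) = (-1) ^ m * (\<Sum>j\<in>{1..t}. (-1) ^ j)"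
    by (simp add: sum_distrib_left)
  also have "(\<Sum>j\<in>{1..t}. (-1::complex) ^ j) = - (\<Sum>j<t. (-1) ^ j)"
    by (simp add: sum.atLeast1_atMost_eq sum_negf)
  finally show ?thesis using alt_sum teven by simp
qed

lemma sx: "sig_x n p r lam m = - u * G m"
proof -
  have "sig_x n p r lam m = (\<Sum>j\<in>{1..t}. (-1) ^ (j * n + m) * u * f (j * n + m))"
    unfolding sig_x_def t_def[symmetric] sz ..
  also have "\<dots> = u * (\<Sum>j\<in>{1..t}. (-1) ^ (j * n + m)) - u * (\<Sum>j\<in>{1..t}. g (j * n + m))"
    unfolding f_def g_def by (simp add: sum_distrib_left sum_subtractf algebra_simps)
  also have "(\<Sum>j\<in>{1..t}. g (j * n + m)) = G (m + n)"
    unfolding G_def by (simp add: sum.atLeast1_atMost_eq algebra_simps)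
  finally show ?thesis using sign_sum G_n by simp
qed

end


lemma prod_add: "(\<Prod>j<a + b. F j) = (\<Prod>j<a. F j) * (\<Prod>j<b. F (a + j :: nat)) "
  for F :: "nat \<Rightarrow> complex"
  by (induction b) (simp_all add: mult.assoc)

lemma sum_add: "(\<Sum>j<a + b. F j) = (\<Sum>j<a. F j) + (\<Sum>j<b. F (a + j :: nat)) "
  for F :: "nat \<Rightarrow> complex"
  by (induction b) (simp_all add: add.assoc)

lemma sum_blocks: "(\<Sum>e<t * n. H e) = (\<Sum>s<t. \<Sum>k<n. H (s * n + k))"
  for H :: "nat \<Rightarrow> complex"
proof (induction t)
  case (Suc t)
  have "(\<Sum>e<Suc t * n. H e) = (\<Sum>e<t * n + n. H e)" by (simp add: add.commute)
  also have "\<dots> = (\<Sum>e<t * n. H e) + (\<Sum>k<n. H (t * n + k))" by (rule sum_add)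
  finally show ?case using Suc.IH by simp
qed simp

lemma sum_shift: 
  fixes Phi :: "nat \<Rightarrow> complex"
  assumes per: "\<And>x. Phi (x + M) = Phi x"
  shows "(\<Sum>e<M. Phi (e + i)) = (\<Sum>e<M. Phi e)"
proof (induction i)
  case (Suc i)
  have e1: "(\<Sum>e<Suc M. Phi (e + i)) = Phi i + (\<Sum>e<M. Phi (e + Suc i))"
    by (subst sum.lessThan_Suc_shift) simp
  have e2: "(\<Sum>e<Suc M. Phi (e + i)) = (\<Sum>e<M. Phi (e + i)) + Phi i"
    using per[of i] by (simp add: add.commute)
  from e1 e2 Suc.IH show ?case by (metis add.commute add_left_cancel)
qed simp

context T2 begin

lemma cnj_g: "cnj (g k) = (-1) ^ h * g (k + h)"
proof -
  have "cnj (g k) = (-1) ^ k * e (- int (r ^ k))" unfolding g_def by (simp add: cnj_e)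
  also have "e (- int (r ^ k)) = e (int (r ^ (k + h)))" using rmh by simp
  also have "(-1::complex) ^ k = (-1) ^ h * (-1) ^ (k + h)"
  proof -
    have "(-1::complex) ^ h * (-1) ^ h = (-1) ^ (2 * h)" by (simp add: mult_2 power_add)
    also have "\<dots> = 1" by (simp add: power_mult)
    finally have "(-1::complex) ^ h * (-1) ^ h = 1" .
    then show ?thesis by (simp add: power_add mult_ac)
  qed
  finally show ?thesis unfolding g_def by (simp add: mult.assoc)
qed

lemma G_N: "G (m + N) = G m" using G_nk[of m t] Nnt by simp

lemma cnj_G: "cnj (G m) = (-1) ^ h * G m"
proof -
  have "cnj (G m) = (-1) ^ h * (\<Sum>s<t. g (s * n + m + h))"
    unfolding G_def by (simp add: cnj_g sum_distrib_left)
  also have "(\<Sum>s<t. g (s * n + m + h)) = G (m + h)" unfolding G_def by (simp add: add.assoc)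
  also have "G (m + h) = G m" using G_nk[of m "t div 2"] hnt by simp
  finally show ?thesis .
qed

lemma Ph: "P h = (\<Prod>j<h. 1 - e (- int (r ^ j)))"
  unfolding P_def f_def using rmh by (simp add: add.commute)

lemma cnj_u0: "cnj u = e (- lam) * P h"
proof -
  have "cnj u = e (- lam) * (\<Prod>j<h. 1 - e (- int (r ^ j)))" unfolding u_def P_def f_def
    by (simp add: cnj_e)
  then show ?thesis using Ph by simp
qed

lemma cnj_u: "cnj u = (-1) ^ h * u"
proof -
  have "cnj u = e (- lam) * P h" by (rule cnj_u0)
  also have "e (- lam) = e (int (r ^ h) * lam)"
  proof (rule e_cong)
    have "[int r ^ h * lam = -1 * lam] (mod int p)" using rh by (rule cong_scalar_right)
    then show "[- lam = int (r ^ h) * lam] (mod int p)" by (simp add: cong_sym)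
  qed
  finally show ?thesis using A[of h] by simp
qed

lemma sx_real: "cnj (sig_x n p r lam m) = sig_x n p r lam m"
proof -
  have "cnj (sig_x n p r lam m) = - ((-1) ^ h * (-1) ^ h) * u * G m"
    unfolding sx by (simp add: cnj_u cnj_G mult_ac)
  also have "(-1::complex) ^ h * (-1) ^ h = 1" by (simp flip: power_add)
  finally show ?thesis unfolding sx by simp
qed

lemma u_sq: "u * u = (-1) ^ h * of_nat p"
proof -
  have "u * cnj u = (e lam * e (- lam)) * (P 0 * P h)" unfolding cnj_u0
    by (simp add: u_def mult_ac)
  also have "e lam * e (- lam) = 1" using e_minus[of lam] by (simp add: mult.commute)
  also have "P 0 * P h = (\<Prod>j<h + h. f j)" unfolding P_def by (simp add: prod_add)
  also have "h + h = N" using N2h by simp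
  also have "(\<Prod>j<N. f j) = of_nat p" unfolding f_def by (rule prod_gen)
  finally have "u * cnj u = of_nat p" by simp
  then have "(-1) ^ h * (u * u) = of_nat p" by (simp add: cnj_u mult_ac)
  then have "(-1) ^ h * ((-1) ^ h * (u * u)) = (-1) ^ h * of_nat p" by simp
  then show ?thesis by (simp add: mult.assoc[symmetric] flip: power_add)
qed

end


context T2 begin

lemma neg1_sq: "(-1::complex) ^ a * (-1) ^ a = 1"
proof -
  have "(-1::complex) ^ a * (-1) ^ a = (-1) ^ (2 * a)" by (simp add: mult_2 power_add)
  also have "\<dots> = 1" by (simp add: power_mult)
  finally show ?thesis .
qed

lemma gg: "g a * g (a + c) = (-1) ^ c * e (int (r ^ a) * (1 + int (r ^ c)))"
proof -
  have "g a * g (a + c) = ((-1) ^ a * (-1) ^ a) * (-1) ^ c * (e (int (r ^ a)) * e (int (r ^ a) * int (r ^ c)))"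
    unfolding g_def by (simp add: power_add mult_ac)
  also have "e (int (r ^ a)) * e (int (r ^ a) * int (r ^ c)) = e (int (r ^ a) * (1 + int (r ^ c)))"
    by (simp add: e_add[symmetric] algebra_simps)
  finally show ?thesis using neg1_sq by simp
qed

lemma dvd_iff: "int p dvd 1 + int (r ^ c) \<longleftrightarrow> [c = h] (mod N)"
proof -
  have "int p dvd 1 + int (r ^ c) \<longleftrightarrow> [int (r ^ c) = -1] (mod int p)"
    using cong_iff_dvd_diff[of "int (r ^ c)" "-1" "int p"] by (simp add: add.commute)
  also have "\<dots> \<longleftrightarrow> [int (r ^ c) = int (r ^ h)] (mod int p)"
    using rh by (metis cong_sym cong_trans of_nat_power)
  also have "\<dots> \<longleftrightarrow> [r ^ c = r ^ h] (mod p)" by (rule cong_int_iff)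
  also have "\<dots> \<longleftrightarrow> [c = h] (mod (ord p r))" by (rule order_divides_expdiff[OF cop])
  finally show ?thesis using ordr unfolding N_def by simp
qed

lemma inner: "(\<Sum>a<N. g a * g (a + c)) =
   (-1) ^ c * ((if [c = h] (mod N) then of_nat p else 0) - 1)"
proof -
  have "(\<Sum>a<N. g a * g (a + c)) = (-1) ^ c * (\<Sum>a<N. e (int (r ^ a) * (1 + int (r ^ c))))"
    by (simp add: gg sum_distrib_left)
  also have "(\<Sum>a<N. e (int (r ^ a) * (1 + int (r ^ c)))) = (if [c = h] (mod N) then of_nat p else 0) - 1"
    using sum_gen[of "1 + int (r ^ c)"] dvd_iff[of c] by simp
  finally show ?thesis .
qed

lemma K1: "(\<Sum>k<n. G (i + k) * G (j + k)) = (\<Sum>a<N. g (a + i) * G (a + j))"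
proof -
  have "(\<Sum>a<N. g (a + i) * G (a + j)) = (\<Sum>s<t. \<Sum>k<n. g (s * n + k + i) * G (s * n + k + j))"
    using sum_blocks[of "\<lambda>a. g (a + i) * G (a + j)" t n] Nnt by (simp add: mult.commute)
  also have "\<dots> = (\<Sum>s<t. \<Sum>k<n. g (s * n + (i + k)) * G (j + k))"
  proof (intro sum.cong refl)
    fix s k
    have "G (s * n + k + j) = G (j + k + n * s)" by (simp add: algebra_simps)
    also have "\<dots> = G (j + k)" by (rule G_nk)
    finally show "g (s * n + k + i) * G (s * n + k + j) = g (s * n + (i + k)) * G (j + k)"
      by (simp add: algebra_simps)
  qed
  also have "\<dots> = (\<Sum>k<n. \<Sum>s<t. g (s * n + (i + k)) * G (j + k))" by (rule sum.swap)
  also have "\<dots> = (\<Sum>k<n. G (i + k) * G (j + k))"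
    unfolding G_def by (simp add: sum_distrib_right)
  finally show ?thesis by simp
qed

lemma K2: assumes "i \<le> N"
  shows "(\<Sum>a<N. g (a + i) * G (a + j)) = (\<Sum>a<N. g a * G (a + (j + N - i)))"
proof -
  let ?Phi = "\<lambda>a. g a * G (a + (j + N - i))"
  have per: "?Phi (x + N) = ?Phi x" for x
  proof -
    have "G (x + N + (j + N - i)) = G ((x + (j + N - i)) + N)" by (simp add: algebra_simps)
    then show ?thesis using g_N G_N by simp
  qed
  have "(\<Sum>a<N. ?Phi (a + i)) = (\<Sum>a<N. ?Phi a)" by (rule sum_shift[where Phi="?Phi" and M=N and i=i, OF per])
  moreover have "?Phi (a + i) = g (a + i) * G (a + j)" for a
  proof -
    have "a + i + (j + N - i) = (a + j) + N" using assms by simp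
    then have "G (a + i + (j + N - i)) = G (a + j)" using G_N[of "a + j"] by (simp add: add.assoc)
    then show ?thesis by simp
  qed
  ultimately show ?thesis by simp
qed

lemma K3: "(\<Sum>a<N. g a * G (a + d)) =
   (\<Sum>s<t. (-1) ^ (s * n + d) * ((if [s * n + d = h] (mod N) then of_nat p else 0) - 1))"
proof -
  have "(\<Sum>a<N. g a * G (a + d)) = (\<Sum>a<N. \<Sum>s<t. g a * g (a + (s * n + d)))"
    unfolding G_def by (simp add: sum_distrib_left algebra_simps)
  also have "\<dots> = (\<Sum>s<t. \<Sum>a<N. g a * g (a + (s * n + d)))" by (rule sum.swap)
  also have "\<dots> = (\<Sum>s<t. (-1) ^ (s * n + d) * ((if [s * n + d = h] (mod N) then of_nat p else 0) - 1))"
    by (simp only: inner)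
  finally show ?thesis .
qed

lemma K4: "(\<Sum>s<t. (-1::complex) ^ (s * n + d)) = 0"
proof -
  have "(-1::complex) ^ (s * n + d) = (-1) ^ d * (-1) ^ s" for s
  proof -
    have "(-1::complex) ^ (s * n) = ((-1) ^ n) ^ s" by (metis power_mult mult.commute)
    also have "(-1::complex) ^ n = -1" using nodd by simp
    finally show ?thesis by (simp add: power_add mult.commute)
  qed
  then have "(\<Sum>s<t. (-1::complex) ^ (s * n + d)) = (-1) ^ d * (\<Sum>s<t. (-1) ^ s)"
    by (simp add: sum_distrib_left)
  then show ?thesis using alt_sum teven by simp
qed

lemma K5: "(\<Sum>a<N. g a * G (a + d)) =
   (\<Sum>s<t. if [s * n + d = h] (mod N) then (-1) ^ (s * n + d) * of_nat p else 0)"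
proof -
  have "(\<Sum>a<N. g a * G (a + d)) =
     (\<Sum>s<t. if [s * n + d = h] (mod N) then (-1) ^ (s * n + d) * of_nat p else 0) - (\<Sum>s<t. (-1::complex) ^ (s * n + d))"
  proof -
    have "(-1::complex) ^ c * ((if C then of_nat p else 0) - 1) = (if C then (-1) ^ c * of_nat p else 0) - (-1) ^ c"
      for c C by (cases C) (simp_all add: algebra_simps)
    then show ?thesis unfolding K3 by (simp only: sum_subtractf)
  qed
  then show ?thesis using K4 by simp
qed

lemma L1: assumes "s < t" shows "[s * n + N = h] (mod N) \<longleftrightarrow> s = t div 2"
proof -
  have "[s * n + N = h] (mod N) \<longleftrightarrow> (s * n) mod (t * n) = h mod (t * n)"
    unfolding cong_def using Nnt by (simp add: mult.commute)
  also have "(s * n) mod (t * n) = s * n" using assms n1 by simp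
  also have "h mod (t * n) = h" using N2h Nnt hpos by (metis mult.commute mod_less less_mult_imp_div_less div_mult_self1_is_m zero_less_numeral lessI numeral_2_eq_2 mult_2 less_add_same_cancel1)
  also have "s * n = h \<longleftrightarrow> s = t div 2" using hnt n1 by (simp add: mult.commute)
  finally show ?thesis .
qed

end


context T2 begin

lemma L2: assumes "i < n" "j < n" "i \<noteq> j"
  shows "\<not> [s * n + (j + N - i) = h] (mod N)"
proof
  assume c: "[s * n + (j + N - i) = h] (mod N)"
  have "n dvd N" using Nnt by simp
  then have "[s * n + (j + N - i) = h] (mod n)" using c cong_dvd_modulus_nat by blast
  moreover have "[h = 0] (mod n)" using hnt by (simp add: cong_0_iff)
  ultimately have "[s * n + (j + N - i) = 0] (mod n)" by (rule cong_trans)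
  then have "n dvd s * n + (j + N - i)" by (simp add: cong_0_iff)
  then have "n dvd j + N - i" by (simp add: dvd_add_right_iff)
  moreover have "j + N - i = (j + n - i) + n * (t - 1)" using Nnt tpos assms(1)
    by (simp add: algebra_simps)
  ultimately have "n dvd j + n - i" by (simp add: dvd_add_left_iff)
  then obtain k where k: "j + n - i = n * k" by blast
  have "k \<noteq> 0"
  proof
    assume "k = 0"
    then have "j + n - i = 0" using k by simp
    then show False using assms by simp
  qed
  moreover have "k \<noteq> 1" using k assms by auto
  moreover have "k < 2" using k assms by (metis add_less_mono1 less_imp_diff_less mult_2_right nat_mult_less_cancel_disj)
  ultimately show False by simp
qed

lemma K: assumes "i < n" "j < n"
  shows "(\<Sum>k<n. G (i + k) * G (j + k)) = (if i = j then (-1) ^ h * of_nat p else 0)"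
proof -
  have iN: "i \<le> N" using assms Nnt tpos by (metis One_nat_def Suc_leI le_trans less_imp_le_nat mult.right_neutral nat_mult_le_cancel_disj)
  have "(\<Sum>k<n. G (i + k) * G (j + k)) =
     (\<Sum>s<t. if [s * n + (j + N - i) = h] (mod N) then (-1) ^ (s * n + (j + N - i)) * of_nat p else 0)"
    unfolding K1 K2[OF iN] K5 ..
  also have "\<dots> = (if i = j then (-1) ^ h * of_nat p else 0)"
  proof (cases "i = j")
    case True
    have "(\<Sum>s<t. if [s * n + (j + N - i) = h] (mod N) then (-1) ^ (s * n + (j + N - i)) * of_nat p else 0)
       = (\<Sum>s<t. if s = t div 2 then (-1) ^ (s * n + N) * of_nat p else (0::complex))"
      using True L1 by (intro sum.cong refl) simp
    also have "\<dots> = (-1) ^ ((t div 2) * n + N) * of_nat p"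
      using tpos by (simp add: sum.delta')
    also have "(t div 2) * n + N = h + N" using hnt by (simp add: mult.commute)
    also have "(-1::complex) ^ (h + N) = (-1) ^ h" using Neven by (simp add: power_add)
    finally show ?thesis using True by simp
  next
    case False
    then show ?thesis using L2[OF assms False] by simp
  qed
  finally show ?thesis .
qed

lemma gram: assumes "i < n" "j < n"
  shows "(\<Sum>k<n. sig_x n p r lam (i + k) * sig_x n p r lam (j + k)) = (if i = j then (of_nat p)^2 else 0)"
proof -
  have "(\<Sum>k<n. sig_x n p r lam (i + k) * sig_x n p r lam (j + k)) = (u * u) * (\<Sum>k<n. G (i + k) * G (j + k))"
    unfolding sx by (simp add: sum_distrib_left mult_ac)
  also have "\<dots> = (if i = j then ((-1) ^ h * (-1) ^ h) * (of_nat p)^2 else 0)"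
    unfolding K[OF assms] u_sq by (simp add: power2_eq_square mult_ac)
  finally show ?thesis using neg1_sq by simp
qed

end


context T2 begin

definition Q :: "nat \<Rightarrow> nat \<Rightarrow> real" where "Q i k = Re (sig_x n p r lam (i + k)) / real p"

definition B :: "nat \<Rightarrow> nat \<Rightarrow> int" where
  "B i l = (if i = 0 then of_bool (l = 0) + of_bool (l = 1) else of_bool (i = l + 1) - of_bool (i = l))"

lemma sx_of_real: "sig_x n p r lam m = complex_of_real (real p * Q l k)" if "l + k = m"
proof -
  have "Im (sig_x n p r lam m) = 0" using sx_real[of m] by (simp add: complex_eq_iff)
  then show ?thesis using that p2 unfolding Q_def by (simp add: complex_eq_iff)
qed

lemma Q_orth: assumes "i < n" "j < n"
  shows "(\<Sum>k<n. Q i k * Q j k) = (if i = j then 1 else 0)"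
proof -
  have "complex_of_real (\<Sum>k<n. Q i k * Q j k) =
      (\<Sum>k<n. sig_x n p r lam (i + k) * sig_x n p r lam (j + k)) / (of_nat p)^2"
    using p2 by (simp add: sx_of_real[OF refl] sum_divide_distrib power2_eq_square)
  also have "\<dots> = (if i = j then 1 else 0)" unfolding gram[OF assms] using p2 by simp
  finally show ?thesis by (metis of_real_eq_1_iff of_real_eq_0_iff)
qed

lemma n2: "n \<ge> 2" using n1 by simp

lemma sum_delta_Q: "a < n \<Longrightarrow> (\<Sum>l<n. (if l = a then Q l m else 0)) = Q a m"
  by (simp add: sum.delta)

lemma gen_B: assumes "i < n"
  shows "complex_of_real (sqrt (1 / (real p)^2)) * sig_gen n p r lam i m =
     complex_of_real (\<Sum>l<n. real_of_int (B i l) * Q l m)"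
proof -
  have sq: "sqrt (1 / (real p)^2) = 1 / real p" using p2 by (simp add: real_sqrt_divide)
  show ?thesis
  proof (cases "i = 0")
    case True
    have "(\<Sum>l<n. real_of_int (B i l) * Q l m) = (\<Sum>l<n. (if l = 0 then Q l m else 0) + (if l = 1 then Q l m else 0))"
      using True by (intro sum.cong refl) (auto simp: B_def)
    also have "\<dots> = (\<Sum>l<n. (if l = 0 then Q l m else 0)) + (\<Sum>l<n. (if l = 1 then Q l m else 0))"
      by (rule sum.distrib)
    also have "\<dots> = Q 0 m + Q 1 m" using n2 by (simp add: sum_delta_Q)
    finally have r: "(\<Sum>l<n. real_of_int (B i l) * Q l m) = Q 0 m + Q 1 m" .
    have "sig_gen n p r lam i m = complex_of_real (real p * Q 0 m) + complex_of_real (real p * Q 1 m)"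
    proof -
      have a: "sig_x n p r lam m = complex_of_real (real p * Q 0 m)" by (rule sx_of_real) simp
      have b: "sig_x n p r lam (m + 1) = complex_of_real (real p * Q 1 m)" by (rule sx_of_real) simp
      show ?thesis unfolding sig_gen_def using True a b by simp
    qed
    then show ?thesis unfolding r sq using p2 by (simp add: field_simps)
  next
    case False
    have "(\<Sum>l<n. real_of_int (B i l) * Q l m) = (\<Sum>l<n. (if l = i - 1 then Q l m else 0) - (if l = i then Q l m else 0))"
      using False by (intro sum.cong refl) (auto simp: B_def)
    also have "\<dots> = (\<Sum>l<n. (if l = i - 1 then Q l m else 0)) - (\<Sum>l<n. (if l = i then Q l m else 0))"
      by (rule sum_subtractf)
    also have "\<dots> = Q (i - 1) m - Q i m" using assms by (simp add: sum_delta_Q)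
    finally have r: "(\<Sum>l<n. real_of_int (B i l) * Q l m) = Q (i - 1) m - Q i m" .
    have "sig_gen n p r lam i m = complex_of_real (real p * Q (i - 1) m) - complex_of_real (real p * Q i m)"
    proof -
      have a: "sig_x n p r lam (i - 1 + m) = complex_of_real (real p * Q (i - 1) m)" by (rule sx_of_real) simp
      have b: "sig_x n p r lam (i + m) = complex_of_real (real p * Q i m)" by (rule sx_of_real) simp
      show ?thesis unfolding sig_gen_def using False a b by simp
    qed
    then show ?thesis unfolding r sq using p2 by (simp add: field_simps)
  qed
qed

lemma vec_eq:
  "complex_of_real (sqrt (1 / (real p)^2)) * (\<Sum>i<n. of_int (c i) * sig_gen n p r lam i m) =
   complex_of_real (\<Sum>l<n. real_of_int (\<Sum>i<n. c i * B i l) * Q l m)"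
proof -
  have "complex_of_real (sqrt (1 / (real p)^2)) * (\<Sum>i<n. of_int (c i) * sig_gen n p r lam i m) =
     (\<Sum>i<n. of_int (c i) * (complex_of_real (sqrt (1 / (real p)^2)) * sig_gen n p r lam i m))"
    by (simp add: sum_distrib_left mult_ac)
  also have "\<dots> = (\<Sum>i<n. of_int (c i) * complex_of_real (\<Sum>l<n. real_of_int (B i l) * Q l m))"
    by (intro sum.cong refl) (simp add: gen_B)
  also have "\<dots> = complex_of_real (\<Sum>i<n. \<Sum>l<n. real_of_int (c i) * real_of_int (B i l) * Q l m)"
    by (simp add: sum_distrib_left mult_ac)
  also have "(\<Sum>i<n. \<Sum>l<n. real_of_int (c i) * real_of_int (B i l) * Q l m) =
      (\<Sum>l<n. real_of_int (\<Sum>i<n. c i * B i l) * Q l m)"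
    by (subst sum.swap) (simp add: sum_distrib_right)
  finally show ?thesis .
qed

lemma Bsum_row: "i < n \<Longrightarrow> (\<Sum>l<n. B i l) = (if i = 0 then 2 else 0)"
proof -
  assume i: "i < n"
  show ?thesis
  proof (cases "i = 0")
    case True
    have "(\<Sum>l<n. B i l) = (\<Sum>l<n. of_bool (l = 0)) + (\<Sum>l<n. of_bool (l = 1))"
      unfolding B_def using True by (simp add: sum.distrib)
    also have "\<dots> = 2" using n2 by (simp add: of_bool_def sum.delta)
    finally show ?thesis using True by simp
  next
    case False
    have "(\<Sum>l<n. B i l) = (\<Sum>l<n. of_bool (l = i - 1) - of_bool (l = i))"
      using False by (intro sum.cong refl) (auto simp: B_def)
    also have "\<dots> = (\<Sum>l<n. of_bool (l = i - 1)) - (\<Sum>l<n. of_bool (l = i))"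
      by (rule sum_subtractf)
    also have "\<dots> = 0" using i by (simp add: of_bool_def sum.delta)
    finally show ?thesis using False by simp
  qed
qed

lemma dsum: "(\<Sum>l<n. \<Sum>i<n. c i * B i l) = 2 * c 0"
proof -
  have "(\<Sum>l<n. \<Sum>i<n. c i * B i l) = (\<Sum>i<n. c i * (\<Sum>l<n. B i l))"
    by (subst sum.swap) (simp add: sum_distrib_left)
  also have "\<dots> = (\<Sum>i<n. if i = 0 then 2 * c i else 0)"
    by (intro sum.cong refl) (simp add: Bsum_row)
  also have "\<dots> = 2 * c 0" using n1 by (simp add: sum.delta)
  finally show ?thesis .
qed

end


context T2 begin

lemma Bform: assumes "l < n"
  shows "(\<Sum>i<n. c i * B i l) = c 0 * (of_bool (l = 0) + of_bool (l = 1)) +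
     (if l + 1 < n then c (l + 1) else 0) - (if 1 \<le> l then c l else 0)"
proof -
  have "{..<n} = insert 0 {1..<n}" using n1 by auto
  then have "(\<Sum>i<n. c i * B i l) = c 0 * B 0 l + (\<Sum>i\<in>{1..<n}. c i * B i l)" by simp
  also have "(\<Sum>i\<in>{1..<n}. c i * B i l) = (\<Sum>i\<in>{1..<n}. (if i = l + 1 then c i else 0) - (if i = l then c i else 0))"
    by (intro sum.cong refl) (auto simp: B_def)
  also have "\<dots> = (\<Sum>i\<in>{1..<n}. (if i = l + 1 then c i else 0)) - (\<Sum>i\<in>{1..<n}. (if i = l then c i else 0))"
    by (rule sum_subtractf)
  also have "\<dots> = (if l + 1 < n then c (l + 1) else 0) - (if 1 \<le> l then c l else 0)"
    using assms by (simp add: sum.delta')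
  finally show ?thesis by (simp add: B_def)
qed

lemma cex: assumes "even (\<Sum>l<n. d l)"
  shows "\<exists>c. \<forall>l<n. (\<Sum>i<n. c i * B i l) = d l"
proof -
  define S where "S = (\<Sum>l<n. d l)"
  define T where "T i = (\<Sum>m\<in>{i..<n}. d m)" for i
  define c where "c i = (if i = 0 then S div 2 else if i = 1 then d 0 - S div 2 else - T i)" for i
  have Tstep: "T l = d l + T (Suc l)" if "l < n" for l
    unfolding T_def using that by (simp add: sum.atLeast_Suc_lessThan)
  have Tn: "T n = 0" unfolding T_def by simp
  have S2: "S = d 0 + d 1 + T 2"
  proof -
    have "S = T 0" unfolding S_def T_def by (simp add: atLeast0LessThan)
    also have "\<dots> = d 0 + (d 1 + T 2)" using Tstep[of 0] Tstep[of 1] n2 by (simp add: numeral_2_eq_2)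
    finally show ?thesis by simp
  qed
  have Sev: "2 * (S div 2) = S" using assms unfolding S_def by simp
  have c_hi: "(if l + 1 < n then c (l + 1) else 0) = - T (l + 1)" if "1 \<le> l" "l < n" for l
  proof (cases "l + 1 < n")
    case False
    then have "l + 1 = n" using that by simp
    then show ?thesis using Tn by simp
  qed (use that in \<open>simp add: c_def\<close>)
  have "(\<Sum>i<n. c i * B i l) = d l" if l: "l < n" for l
  proof -
    consider "l = 0" | "l = 1" | "l \<ge> 2" by linarith
    then show ?thesis
    proof cases
      case 1
      then show ?thesis using Bform[OF l, of c] n1 by (simp add: c_def)
    next
      case 2
      have "(\<Sum>i<n. c i * B i l) = c 0 - T 2 - c 1"
        using Bform[OF l, of c] c_hi[OF _ l] 2 by (simp add: numeral_2_eq_2)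
      also have "\<dots> = 2 * (S div 2) - d 0 - T 2" by (simp add: c_def)
      also have "\<dots> = d l" using Sev S2 2 by simp
      finally show ?thesis .
    next
      case 3
      have "(\<Sum>i<n. c i * B i l) = - T (l + 1) - c l"
        using Bform[OF l, of c] c_hi[OF _ l] 3 by simp
      also have "\<dots> = d l" using 3 Tstep[OF l] by (simp add: c_def)
      finally show ?thesis .
    qed
  qed
  then show ?thesis by blast
qed

lemma main: "\<exists>Q :: nat \<Rightarrow> nat \<Rightarrow> real.
           (\<forall>i<n. \<forall>j<n. (\<Sum>k<n. Q i k * Q j k) = (if i = j then 1 else 0)) \<and>
           phiM n p r lam =
             {(\<lambda>k. if k < n then complex_of_real (\<Sum>i<n. real_of_int (d i) * Q i k) else 0)
               | d :: nat \<Rightarrow> int. even (\<Sum>i<n. d i)}"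
proof -
  have o: "\<forall>i<n. \<forall>j<n. (\<Sum>k<n. Q i k * Q j k) = (if i = j then 1 else 0)"
    using Q_orth by blast
  have "phiM n p r lam =
    {(\<lambda>k. if k < n then complex_of_real (\<Sum>i<n. real_of_int (d i) * Q i k) else 0)
               | d :: nat \<Rightarrow> int. even (\<Sum>i<n. d i)}"
  proof (intro equalityI subsetI)
    fix x assume "x \<in> phiM n p r lam"
    then obtain c :: "nat \<Rightarrow> int" where x: "x = (\<lambda>m. if m < n then complex_of_real (sqrt (1 / (real p)^2)) *
                        (\<Sum>i<n. of_int (c i) * sig_gen n p r lam i m) else 0)"
      unfolding phiM_def by blast
    let ?d = "\<lambda>l. \<Sum>i<n. c i * B i l"
    have x1: "x = (\<lambda>k. if k < n then complex_of_real (\<Sum>l<n. real_of_int (?d l) * Q l k) else 0)"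
      unfolding x vec_eq ..
    have x2: "even (\<Sum>l<n. ?d l)" unfolding dsum by simp
    have "\<exists>d::nat\<Rightarrow>int. x = (\<lambda>k. if k < n then complex_of_real (\<Sum>i<n. real_of_int (d i) * Q i k) else 0) \<and> even (\<Sum>i<n. d i)"
      by (rule exI[of _ ?d]) (use x1 x2 in simp)
    then show "x \<in> {(\<lambda>k. if k < n then complex_of_real (\<Sum>i<n. real_of_int (d i) * Q i k) else 0)
               | d :: nat \<Rightarrow> int. even (\<Sum>i<n. d i)}" by blast
  next
    fix x assume "x \<in> {(\<lambda>k. if k < n then complex_of_real (\<Sum>i<n. real_of_int (d i) * Q i k) else 0)
               | d :: nat \<Rightarrow> int. even (\<Sum>i<n. d i)}"
    then obtain d :: "nat \<Rightarrow> int" where x: "x = (\<lambda>k. if k < n then complex_of_real (\<Sum>i<n. real_of_int (d i) * Q i k) else 0)"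
      and ev: "even (\<Sum>i<n. d i)" by blast
    obtain c where c: "\<forall>l<n. (\<Sum>i<n. c i * B i l) = d l" using cex[OF ev] by blast
    have eqk: "(\<Sum>l<n. real_of_int (d l) * Q l k) = (\<Sum>l<n. real_of_int (\<Sum>i<n. c i * B i l) * Q l k)" for k
      using c by (intro sum.cong refl) simp
    have "x = (\<lambda>m. if m < n then complex_of_real (sqrt (1 / (real p)^2)) *
                        (\<Sum>i<n. of_int (c i) * sig_gen n p r lam i m) else 0)"
      unfolding x vec_eq eqk by (rule refl)
    then show "x \<in> phiM n p r lam" unfolding phiM_def by blast
  qed
  then show ?thesis using o by blast
qed

end

theorem theorem2:
  fixes n p r :: nat and lam :: int
  assumes "n > 1" and "odd n" and "prime p" and "[p = 1] (mod n)"
    and "ord p r = p - 1"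
    and "[lam * (int r - 1) = 1] (mod int p)"
  shows "\<exists>Q :: nat \<Rightarrow> nat \<Rightarrow> real.
           (\<forall>i<n. \<forall>j<n. (\<Sum>k<n. Q i k * Q j k) = (if i = j then 1 else 0)) \<and>
           phiM n p r lam =
             {(\<lambda>k. if k < n then complex_of_real (\<Sum>i<n. real_of_int (d i) * Q i k) else 0)
               | d :: nat \<Rightarrow> int. even (\<Sum>i<n. d i)}"
proof -
  interpret T2 n p r lam using assms by unfold_locales
  show ?thesis by (rule main)
qed

end
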